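(* Consider an agent-dependent SDP performance estimation problem for distributed optimization with $n\ge2$ agents in which all agents are equivalent, and let $(F,G)$ with $F=[f_1^T\dots f_n^T]$, $G=[G_{ij}]$ be any feasible solution. Define $f^A=\frac1n\sum_{i=1}^nf_i\in\mathbb{R}^q$, $G^A=\frac1n\sum_{i=1}^nG_{ii}\in\mathbb{R}^{p\times p}$, $G^C=\frac{1}{n(n-1)}\sum_{i=1}^n\sum_{j\ne i}G_{ij}\in\mathbb{R}^{p\times p}$, and let $F^s=[(f^A)^T\dots(f^A)^T]$ and $G^s\in\mathbb{R}^{np\times np}$ be the block matrix with all diagonal blocks equal to $G^A$ and all off-diagonal blocks equal to $G^C$. Then $(F^s,G^s)$ is feasible for the PEP and has the same objective value as $(F,G)$.
   Context: In the agent-dependent SDP PEP, each agent $i$ holds $p$ vector variables (iterates, consensus outputs, gradients, copies of common points such as $x^*$), gathered as columns of $P_i\in\mathbb{R}^{d\times p}$ in the same order for all agents, and $q$ function values in $f_i\in\mathbb{R}^q$; the variables are $F=[f_1^T\dots f_n^T]$ and $G=P^TP\succeq0$, $P=[P_1\dots P_n]$, $G_{ij}=P_i^TP_j$. The objective (performance criterion) and all constraints (algorithm, function-class interpolation, initial conditions, optimality condition $\frac1n\sum_i\nabla f_i(x^* )=0$, consensus constraints) are linear or linear-matrix-inequality constraints in $(F,G)$, plus $G\succeq0$. Agents $i,j$ are equivalent if for every feasible $(F,G)$, swapping the blocks of agents $i$ and $j$ in $F$ and in the block rows/columns of $G$ gives a feasible solution with the same objective value; "all agents equivalent" means every pair of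 agents is equivalent. *)

theory Defs
  imports Complex_Main
begin

text \<open>Agents are indexed by 0..<n, the p vector variables of each agent by 0..<p,
  the q function values of each agent by 0..<q.
  F a k = k-th entry of f_a; G (a,k) (b,l) = entry (k,l) of block G_ab = P_a^T P_b.\<close>

definition agidx :: "nat \<Rightarrow> nat \<Rightarrow> (nat \<times> nat) set" where
  "agidx n p = {..<n} \<times> {..<p}"

definition psd_on :: "'a set \<Rightarrow> ('a \<Rightarrow> 'a \<Rightarrow> real) \<Rightarrow> bool" where
  "psd_on I M \<longleftrightarrow> (\<forall>a\<in>I. \<forall>b\<in>I. M a b = M b a) \<and>
     (\<forall>x :: 'a \<Rightarrow> real. 0 \<le> (\<Sum>a\<in>I. \<Sum>b\<in>I. x a * M a b * x b))"

text \<open>Linear (in)equality constraints are the special case dim = 1 (equalities as two inequalities).\<close>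
record lmi =
  dim :: nat
  c0 :: "nat \<Rightarrow> nat \<Rightarrow> real"
  cF :: "nat \<Rightarrow> nat \<Rightarrow> nat \<Rightarrow> nat \<Rightarrow> real"
  cG :: "nat \<Rightarrow> nat \<Rightarrow> nat \<times> nat \<Rightarrow> nat \<times> nat \<Rightarrow> real"

definition lmi_val ::
  "nat \<Rightarrow> nat \<Rightarrow> nat \<Rightarrow> lmi \<Rightarrow> (nat \<Rightarrow> nat \<Rightarrow> real) \<Rightarrow> (nat \<times> nat \<Rightarrow> nat \<times> nat \<Rightarrow> real)
     \<Rightarrow> nat \<Rightarrow> nat \<Rightarrow> real" where
  "lmi_val n p q L F G a b =
     c0 L a b + (\<Sum>i<n. \<Sum>k<q. cF L a b i k * F i k)
     + (\<Sum>u\<in>agidx n p. \<Sum>v\<in>agidx n p. cG L a b u v * G u v)"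

definition pep_feasible ::
  "nat \<Rightarrow> nat \<Rightarrow> nat \<Rightarrow> lmi set \<Rightarrow> (nat \<Rightarrow> nat \<Rightarrow> real) \<Rightarrow> (nat \<times> nat \<Rightarrow> nat \<times> nat \<Rightarrow> real) \<Rightarrow> bool" where
  "pep_feasible n p q cons F G \<longleftrightarrow>
     psd_on (agidx n p) G \<and> (\<forall>L\<in>cons. psd_on {..<dim L} (lmi_val n p q L F G))"

definition pep_obj ::
  "nat \<Rightarrow> nat \<Rightarrow> nat \<Rightarrow> (nat \<Rightarrow> nat \<Rightarrow> real) \<Rightarrow> (nat \<times> nat \<Rightarrow> nat \<times> nat \<Rightarrow> real)
     \<Rightarrow> (nat \<Rightarrow> nat \<Rightarrow> real) \<Rightarrow> (nat \<times> nat \<Rightarrow> nat \<times> nat \<Rightarrow> real) \<Rightarrow> real" where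
  "pep_obj n p q oF oG F G =
     (\<Sum>i<n. \<Sum>k<q. oF i k * F i k) + (\<Sum>u\<in>agidx n p. \<Sum>v\<in>agidx n p. oG u v * G u v)"

definition agent_swap :: "nat \<Rightarrow> nat \<Rightarrow> nat \<Rightarrow> nat" where
  "agent_swap i j a = (if a = i then j else if a = j then i else a)"

definition swapF :: "nat \<Rightarrow> nat \<Rightarrow> (nat \<Rightarrow> nat \<Rightarrow> real) \<Rightarrow> (nat \<Rightarrow> nat \<Rightarrow> real)" where
  "swapF i j F = (\<lambda>a k. F (agent_swap i j a) k)"

definition swapG :: "nat \<Rightarrow> nat \<Rightarrow> (nat \<times> nat \<Rightarrow> nat \<times> nat \<Rightarrow> real) \<Rightarrow> (nat \<times> nat \<Rightarrow> nat \<times> nat \<Rightarrow> real)" where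
  "swapG i j G = (\<lambda>(a, k) (b, l). G (agent_swap i j a, k) (agent_swap i j b, l))"

definition all_agents_equivalent ::
  "nat \<Rightarrow> nat \<Rightarrow> nat \<Rightarrow> lmi set \<Rightarrow> (nat \<Rightarrow> nat \<Rightarrow> real) \<Rightarrow> (nat \<times> nat \<Rightarrow> nat \<times> nat \<Rightarrow> real) \<Rightarrow> bool" where
  "all_agents_equivalent n p q cons oF oG \<longleftrightarrow>
     (\<forall>i<n. \<forall>j<n. \<forall>F G. pep_feasible n p q cons F G \<longrightarrow>
        pep_feasible n p q cons (swapF i j F) (swapG i j G) \<and>
        pep_obj n p q oF oG (swapF i j F) (swapG i j G) = pep_obj n p q oF oG F G)"

definition fA :: "nat \<Rightarrow> (nat \<Rightarrow> nat \<Rightarrow> real) \<Rightarrow> nat \<Rightarrow> real" where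
  "fA n F k = (1 / real n) * (\<Sum>i<n. F i k)"

definition GA :: "nat \<Rightarrow> (nat \<times> nat \<Rightarrow> nat \<times> nat \<Rightarrow> real) \<Rightarrow> nat \<Rightarrow> nat \<Rightarrow> real" where
  "GA n G k l = (1 / real n) * (\<Sum>i<n. G (i, k) (i, l))"

definition GC :: "nat \<Rightarrow> (nat \<times> nat \<Rightarrow> nat \<times> nat \<Rightarrow> real) \<Rightarrow> nat \<Rightarrow> nat \<Rightarrow> real" where
  "GC n G k l = (1 / (real n * (real n - 1))) * (\<Sum>i<n. \<Sum>j\<in>{..<n} - {i}. G (i, k) (j, l))"

definition Fs :: "nat \<Rightarrow> (nat \<Rightarrow> nat \<Rightarrow> real) \<Rightarrow> nat \<Rightarrow> nat \<Rightarrow> real" where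
  "Fs n F = (\<lambda>i k. fA n F k)"

definition Gs :: "nat \<Rightarrow> (nat \<times> nat \<Rightarrow> nat \<times> nat \<Rightarrow> real) \<Rightarrow> nat \<times> nat \<Rightarrow> nat \<times> nat \<Rightarrow> real" where
  "Gs n G = (\<lambda>(i, k) (j, l). if i = j then GA n G k l else GC n G k l)"

end

theory Submission
  imports Defs "HOL-Combinatorics.Permutations"
begin

lemma dsum_avg:
  fixes c :: "'a \<Rightarrow> 'b \<Rightarrow> real"
  shows "(\<Sum>i\<in>A. \<Sum>k\<in>B. c i k * (\<Sum>x\<in>X. w x * H x i k))
   = (\<Sum>x\<in>X. w x * (\<Sum>i\<in>A. \<Sum>k\<in>B. c i k * H x i k))"
proof -
  have "(\<Sum>i\<in>A. \<Sum>k\<in>B. c i k * (\<Sum>x\<in>X. w x * H x i k))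
      = (\<Sum>i\<in>A. \<Sum>k\<in>B. \<Sum>x\<in>X. w x * (c i k * H x i k))"
    by (intro sum.cong refl) (simp add: sum_distrib_left mult.left_commute)
  also have "\<dots> = (\<Sum>i\<in>A. \<Sum>x\<in>X. \<Sum>k\<in>B. w x * (c i k * H x i k))"
    by (rule sum.cong[OF refl], rule sum.swap)
  also have "\<dots> = (\<Sum>x\<in>X. \<Sum>i\<in>A. \<Sum>k\<in>B. w x * (c i k * H x i k))"
    by (rule sum.swap)
  also have "\<dots> = (\<Sum>x\<in>X. w x * (\<Sum>i\<in>A. \<Sum>k\<in>B. c i k * H x i k))"
    by (simp add: sum_distrib_left)
  finally show ?thesis .
qed

lemma psd_avg:
  assumes "\<And>x. x \<in> X \<Longrightarrow> psd_on I (M x)" "\<And>x. x \<in> X \<Longrightarrow> w x \<ge> 0"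
  shows "psd_on I (\<lambda>a b. \<Sum>x\<in>X. w x * M x a b)"
  unfolding psd_on_def
proof (intro conjI ballI allI)
  fix a b assume "a \<in> I" "b \<in> I"
  then show "(\<Sum>x\<in>X. w x * M x a b) = (\<Sum>x\<in>X. w x * M x b a)"
    using assms(1) by (auto simp: psd_on_def intro!: sum.cong)
next
  fix y :: "_ \<Rightarrow> real"
  have "(\<Sum>a\<in>I. \<Sum>b\<in>I. y a * (\<Sum>x\<in>X. w x * M x a b) * y b)
      = (\<Sum>x\<in>X. w x * (\<Sum>a\<in>I. \<Sum>b\<in>I. y a * M x a b * y b))"
  proof -
    have "(\<Sum>a\<in>I. \<Sum>b\<in>I. y a * (\<Sum>x\<in>X. w x * M x a b) * y b)
      = (\<Sum>a\<in>I. \<Sum>b\<in>I. (y a * y b) * (\<Sum>x\<in>X. w x * M x a b))"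
      by (intro sum.cong refl) (simp add: mult_ac)
    also have "\<dots> = (\<Sum>x\<in>X. w x * (\<Sum>a\<in>I. \<Sum>b\<in>I. (y a * y b) * M x a b))"
      by (rule dsum_avg)
    also have "\<dots> = (\<Sum>x\<in>X. w x * (\<Sum>a\<in>I. \<Sum>b\<in>I. y a * M x a b * y b))"
      by (simp add: mult_ac)
    finally show ?thesis .
  qed
  also have "\<dots> \<ge> 0"
    by (rule sum_nonneg, rule mult_nonneg_nonneg) (use assms in \<open>auto simp: psd_on_def\<close>)
  finally show "0 \<le> (\<Sum>a\<in>I. \<Sum>b\<in>I. y a * (\<Sum>x\<in>X. w x * M x a b) * y b)" .
qed

lemma lmi_val_avg:
  assumes "(\<Sum>x\<in>X. w x) = 1"
  shows "lmi_val n p q L (\<lambda>i k. \<Sum>x\<in>X. w x * FF x i k) (\<lambda>u v. \<Sum>x\<in>X. w x * GG x u v) a b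
    = (\<Sum>x\<in>X. w x * lmi_val n p q L (FF x) (GG x) a b)"
proof -
  have "c0 L a b = (\<Sum>x\<in>X. w x * c0 L a b)" using assms by (simp add: sum_distrib_right[symmetric])
  then show ?thesis
    unfolding lmi_val_def dsum_avg
    by (simp only: sum.distrib distrib_left)
qed

lemma obj_avg:
  assumes "(\<Sum>x\<in>X. w x) = 1"
  shows "pep_obj n p q oF oG (\<lambda>i k. \<Sum>x\<in>X. w x * FF x i k) (\<lambda>u v. \<Sum>x\<in>X. w x * GG x u v)
    = (\<Sum>x\<in>X. w x * pep_obj n p q oF oG (FF x) (GG x))"
  unfolding pep_obj_def dsum_avg
  by (simp only: sum.distrib distrib_left)

lemma feasible_avg:
  assumes "(\<Sum>x\<in>X. w x) = 1" "\<And>x. x \<in> X \<Longrightarrow> w x \<ge> 0"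
    "\<And>x. x \<in> X \<Longrightarrow> pep_feasible n p q cons (FF x) (GG x)"
  shows "pep_feasible n p q cons (\<lambda>i k. \<Sum>x\<in>X. w x * FF x i k) (\<lambda>u v. \<Sum>x\<in>X. w x * GG x u v)"
  unfolding pep_feasible_def
proof (intro conjI ballI)
  show "psd_on (agidx n p) (\<lambda>u v. \<Sum>x\<in>X. w x * GG x u v)"
    using assms by (intro psd_avg) (auto simp: pep_feasible_def)
next
  fix L assume "L \<in> cons"
  then show "psd_on {..<dim L} (lmi_val n p q L (\<lambda>i k. \<Sum>x\<in>X. w x * FF x i k) (\<lambda>u v. \<Sum>x\<in>X. w x * GG x u v))"
    unfolding lmi_val_avg[OF assms(1)]
    using assms by (intro psd_avg) (auto simp: pep_feasible_def)
qed

lemma feasible_cong: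
  assumes "\<And>i k. i < n \<Longrightarrow> k < q \<Longrightarrow> F i k = F' i k"
    "\<And>u v. u \<in> agidx n p \<Longrightarrow> v \<in> agidx n p \<Longrightarrow> G u v = G' u v"
  shows "pep_feasible n p q cons F G = pep_feasible n p q cons F' G'"
    "pep_obj n p q oF oG F G = pep_obj n p q oF oG F' G'"
proof -
  have l: "lmi_val n p q L F G = lmi_val n p q L F' G'" for L
    using assms unfolding lmi_val_def by (intro ext) (auto intro!: sum.cong arg_cong2[where f="(+)"])
  have g: "psd_on (agidx n p) G = psd_on (agidx n p) G'"
    using assms unfolding psd_on_def by (auto intro!: sum.cong)
  show "pep_feasible n p q cons F G = pep_feasible n p q cons F' G'"
    unfolding pep_feasible_def l g ..
  show "pep_obj n p q oF oG F G = pep_obj n p q oF oG F' G'"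
    using assms unfolding pep_obj_def by (auto intro!: sum.cong arg_cong2[where f="(+)"])
qed

definition PF :: "(nat \<Rightarrow> nat) \<Rightarrow> (nat \<Rightarrow> nat \<Rightarrow> real) \<Rightarrow> nat \<Rightarrow> nat \<Rightarrow> real" where
  "PF s F = (\<lambda>a k. F (s a) k)"
definition PG :: "(nat \<Rightarrow> nat) \<Rightarrow> (nat \<times> nat \<Rightarrow> nat \<times> nat \<Rightarrow> real) \<Rightarrow> nat \<times> nat \<Rightarrow> nat \<times> nat \<Rightarrow> real" where
  "PG s G = (\<lambda>(a, k) (b, l). G (s a, k) (s b, l))"

lemma perm_ok:
  assumes "s permutes {..<n}" "all_agents_equivalent n p q cons oF oG"
  shows "\<forall>F G. pep_feasible n p q cons F G \<longrightarrow>
     pep_feasible n p q cons (PF s F) (PG s G) \<and> pep_obj n p q oF oG (PF s F) (PG s G) = pep_obj n p q oF oG F G"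
  using assms(1) finite_lessThan
proof (induction rule: permutes_induct)
  case id
  have "PF (\<lambda>a. a) F = F" "PG (\<lambda>a. a) G = G" for F G by (auto simp: PF_def PG_def)
  then show ?case by simp
next
  case (swap a b s)
  have e: "PF (Transposition.transpose a b \<circ> s) F = PF s (swapF a b F)"
       "PG (Transposition.transpose a b \<circ> s) G = PG s (swapG a b G)" for F G
    by (auto simp: PF_def PG_def swapF_def swapG_def agent_swap_def Transposition.transpose_def)
  show ?case
  proof (intro allI impI)
    fix F G assume f: "pep_feasible n p q cons F G"
    have "pep_feasible n p q cons (swapF a b F) (swapG a b G) \<and>
        pep_obj n p q oF oG (swapF a b F) (swapG a b G) = pep_obj n p q oF oG F G"
      using assms(2) f swap.hyps(1,2) unfolding all_agents_equivalent_def by auto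
    then show "pep_feasible n p q cons (PF (Transposition.transpose a b \<circ> s) F) (PG (Transposition.transpose a b \<circ> s) G) \<and>
        pep_obj n p q oF oG (PF (Transposition.transpose a b \<circ> s) F) (PG (Transposition.transpose a b \<circ> s) G) = pep_obj n p q oF oG F G"
      unfolding e using swap.IH by auto
  qed
qed

lemma avg1:
  fixes h :: "nat \<Rightarrow> real"
  assumes "i < n"
  shows "(\<Sum>s\<in>{s. s permutes {..<n}}. h (s i)) = fact n / real n * (\<Sum>m<n. h m)"
proof -
  let ?P = "{s. s permutes {..<n}}"
  have eq: "(\<Sum>s\<in>?P. h (s i')) = (\<Sum>s\<in>?P. h (s i))" if "i' < n" for i'
  proof -
    have "Transposition.transpose i i' permutes {..<n}"
      using assms that by (intro permutes_swap_id) auto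
    from sum_permutations_compose_right[OF this, of "\<lambda>s. h (s i)"]
    show ?thesis by simp
  qed
  have "real n * (\<Sum>s\<in>?P. h (s i)) = (\<Sum>i'<n. \<Sum>s\<in>?P. h (s i'))"
    using eq by simp
  also have "\<dots> = (\<Sum>s\<in>?P. \<Sum>i'<n. h (s i'))" by (rule sum.swap)
  also have "\<dots> = (\<Sum>s\<in>?P. \<Sum>m<n. h m)"
  proof (rule sum.cong[OF refl])
    fix s assume "s \<in> ?P"
    then have "s permutes {..<n}" by simp
    from sum.permute[OF this, of h] show "(\<Sum>i'<n. h (s i')) = (\<Sum>m<n. h m)" by (simp add: o_def)
  qed
  also have "\<dots> = fact n * (\<Sum>m<n. h m)"
    using card_permutations[of "{..<n}" n] by simp
  finally show ?thesis using assms by (simp add: field_simps)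
qed

lemma perm_offdiag:
  fixes g :: "nat \<Rightarrow> nat \<Rightarrow> real"
  assumes "s permutes S" "finite S"
  shows "(\<Sum>a\<in>S. \<Sum>b\<in>S - {a}. g (s a) (s b)) = (\<Sum>a\<in>S. \<Sum>b\<in>S - {a}. g a b)"
proof -
  have "(\<Sum>a\<in>S. \<Sum>b\<in>S - {a}. g (s a) (s b)) = (\<Sum>a\<in>S. (\<Sum>b\<in>S. g (s a) (s b)) - g (s a) (s a))"
    using assms(2) by (intro sum.cong refl) (simp add: sum_diff1)
  also have "\<dots> = (\<Sum>a\<in>S. (\<Sum>b\<in>S. g (s a) b) - g (s a) (s a))"
  proof -
    have aux: "(\<Sum>b\<in>S. g x (s b)) = (\<Sum>b\<in>S. g x b)" for x
      using sum.permute[OF assms(1), of "g x"] by (simp add: o_def)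
    show ?thesis by (simp add: aux)
  qed
  also have "\<dots> = (\<Sum>a\<in>S. (\<Sum>b\<in>S. g a b) - g a a)"
    using sum.permute[OF assms(1), of "\<lambda>a. (\<Sum>b\<in>S. g a b) - g a a"] by (simp add: o_def)
  also have "\<dots> = (\<Sum>a\<in>S. \<Sum>b\<in>S - {a}. g a b)"
    using assms(2) by (intro sum.cong refl) (simp add: sum_diff1)
  finally show ?thesis .
qed

lemma avg2:
  fixes g :: "nat \<Rightarrow> nat \<Rightarrow> real"
  assumes "i < n" "j < n" "i \<noteq> j"
  shows "(\<Sum>s\<in>{s. s permutes {..<n}}. g (s i) (s j))
     = fact n / (real n * (real n - 1)) * (\<Sum>a<n. \<Sum>b\<in>{..<n} - {a}. g a b)"
proof -
  let ?P = "{s. s permutes {..<n}}"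
  let ?C = "\<lambda>a b. (\<Sum>s\<in>?P. g (s a) (s b))"
  have eq: "?C a b = ?C i j" if "a < n" "b < n" "a \<noteq> b" for a b
  proof -
    define t1 where "t1 = Transposition.transpose i a"
    define t where "t = Transposition.transpose (t1 j) b \<circ> t1"
    have t1j: "t1 j < n" "t1 j \<noteq> a" using assms that unfolding t1_def Transposition.transpose_def by auto
    have tp: "t permutes {..<n}" unfolding t_def t1_def
      using assms that t1j by (intro permutes_compose permutes_swap_id) (auto simp: t1_def)
    have ti: "t i = a" "t j = b" using t1j that unfolding t_def
      by (auto simp: t1_def Transposition.transpose_def)
    from sum_permutations_compose_right[OF tp, of "\<lambda>s. g (s i) (s j)"]
    show ?thesis using ti by simp
  qed
  have cardm: "card ({..<n} - {a}) = n - 1" if "a < n" for a using that by simp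
  have "real n * (real n - 1) * ?C i j = (\<Sum>a<n. \<Sum>b\<in>{..<n} - {a}. ?C i j)"
    using assms cardm by (simp add: of_nat_diff)
  also have "\<dots> = (\<Sum>a<n. \<Sum>b\<in>{..<n} - {a}. ?C a b)"
    by (rule sum.cong[OF refl], rule sum.cong[OF refl], rule eq[symmetric]) auto
  also have "\<dots> = (\<Sum>a<n. \<Sum>s\<in>?P. \<Sum>b\<in>{..<n} - {a}. g (s a) (s b))"
    by (rule sum.cong[OF refl], rule sum.swap)
  also have "\<dots> = (\<Sum>s\<in>?P. \<Sum>a<n. \<Sum>b\<in>{..<n} - {a}. g (s a) (s b))"
    by (rule sum.swap)
  also have "\<dots> = (\<Sum>s\<in>?P. \<Sum>a<n. \<Sum>b\<in>{..<n} - {a}. g a b)"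
    by (intro sum.cong refl perm_offdiag) auto
  also have "\<dots> = fact n * (\<Sum>a<n. \<Sum>b\<in>{..<n} - {a}. g a b)"
    using card_permutations[of "{..<n}" n] by simp
  finally have *: "real n * (real n - 1) * ?C i j = fact n * (\<Sum>a<n. \<Sum>b\<in>{..<n} - {a}. g a b)" .
  have "real n * (real n - 1) \<noteq> 0" using assms by auto
  with * show ?thesis by (simp add: field_simps)
qed

theorem corollary1:
  fixes n p q :: nat and cons :: "lmi set"
    and oF :: "nat \<Rightarrow> nat \<Rightarrow> real" and oG :: "nat \<times> nat \<Rightarrow> nat \<times> nat \<Rightarrow> real"
    and F :: "nat \<Rightarrow> nat \<Rightarrow> real" and G :: "nat \<times> nat \<Rightarrow> nat \<times> nat \<Rightarrow> real"
  assumes "n \<ge> 2"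
    and "all_agents_equivalent n p q cons oF oG"
    and "pep_feasible n p q cons F G"
  shows "pep_feasible n p q cons (Fs n F) (Gs n G) \<and>
         pep_obj n p q oF oG (Fs n F) (Gs n G) = pep_obj n p q oF oG F G"
proof -
  let ?P = "{s. s permutes {..<n}}"
  define w :: "(nat \<Rightarrow> nat) \<Rightarrow> real" where "w = (\<lambda>_. 1 / fact n)"
  have cardP: "card ?P = fact n" using card_permutations[of "{..<n}" n] by simp
  have w1: "(\<Sum>s\<in>?P. w s) = 1" unfolding w_def using cardP by simp
  have w0: "\<And>s. s \<in> ?P \<Longrightarrow> w s \<ge> 0" unfolding w_def by simp
  have ok: "pep_feasible n p q cons (PF s F) (PG s G) \<and> pep_obj n p q oF oG (PF s F) (PG s G) = pep_obj n p q oF oG F G"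
    if "s \<in> ?P" for s
    using perm_ok[of s n p q cons oF oG] that assms(2,3) by auto
  let ?AF = "\<lambda>i k. \<Sum>s\<in>?P. w s * PF s F i k"
  let ?AG = "\<lambda>u v. \<Sum>s\<in>?P. w s * PG s G u v"
  have fa: "pep_feasible n p q cons ?AF ?AG"
    using ok by (intro feasible_avg[OF w1 w0]) auto
  have oa: "pep_obj n p q oF oG ?AF ?AG = pep_obj n p q oF oG F G"
    unfolding obj_avg[OF w1] using ok w1 by (simp add: sum_distrib_right[symmetric])
  have cF: "?AF i k = Fs n F i k" if "i < n" "k < q" for i k
  proof -
    have "?AF i k = 1 / fact n * (\<Sum>s\<in>?P. F (s i) k)"
      by (simp add: w_def PF_def sum_distrib_left)
    also have "\<dots> = Fs n F i k"
      using avg1[OF that(1), of "\<lambda>m. F m k"] unfolding Fs_def fA_def by simp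
    finally show ?thesis .
  qed
  have cG: "?AG u v = Gs n G u v" if huv: "u \<in> agidx n p" "v \<in> agidx n p" for u v
  proof -
    obtain a k b l where uv: "u = (a, k)" "v = (b, l)" "a < n" "b < n"
      using huv unfolding agidx_def by (cases u, cases v) auto
    have "?AG u v = 1 / fact n * (\<Sum>s\<in>?P. G (s a, k) (s b, l))"
      by (simp add: w_def PG_def sum_distrib_left uv)
    also have "\<dots> = Gs n G u v"
    proof (cases "a = b")
      case True
      show ?thesis using avg1[OF uv(3), of "\<lambda>m. G (m, k) (m, l)"] True uv
        unfolding Gs_def GA_def by simp
    next
      case False
      show ?thesis using avg2[OF uv(3,4) False, of "\<lambda>x y. G (x, k) (y, l)"] False uv
        unfolding Gs_def GC_def by simp
    qed
    finally show ?thesis .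
  qed
  show ?thesis
    using fa oa feasible_cong[of n q ?AF "Fs n F" p ?AG "Gs n G"] cF cG by simp
qed

end
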